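(* Let ${\bf S}\in\{{\bf Tmd},{\bf Tm4d}\}$. Then for every $n\geq 3$, the formula $\gamma(n)$ is not a theorem of ${\bf S}$.
   Context: Formulas are built from a denumerable set of propositional variables $p_1,p_2,\ldots$ by the unary connectives $\neg$, $\Box$ and the binary connective $\to$; $For$ is the set of all formulas. Abbreviations: $\Diamond\alpha:=\neg\Box\neg\alpha$, $\alpha\vee\beta:=\neg\alpha\to\beta$. For formulas $\alpha_1,\ldots,\alpha_k$ ($k\ge 2$), $\bigvee\{\alpha_1,\ldots,\alpha_k\}:=((\ldots((\alpha_1\vee\alpha_2)\vee\alpha_3)\vee\ldots)\vee\alpha_k)$. For $n\geq 3$: $\alpha(n)=\bigvee\{p_j: 1\le j\le n\}$, $\beta_i(n)=\bigvee\{p_j:1\le j\le n,\ j\ne i\}$ for $1\le i\le n$, and $\gamma(n)=\bigvee\{\Box\neg\Box\alpha(n)\to\Box\neg\Box\beta_i(n): 1\le i\le n\}$. ${\bf Tmd}$ is the Hilbert calculus whose axioms are all instances (over $For$) of the axiom schemas of a standard Hilbert calculus for classical propositional logic in the signature $\{\neg,\to\}$, plus all instances of: (K) $\Box(\alpha\to\beta)\to(\Box\alpha\to\Box\beta)$; (Kdet) $\Box(\alpha\to\beta)\to(\Diamond\alpha\to\Box\beta)$; (K2) $\Diamond(\alpha\to\beta)\to(\Box\alpha\to\Diamond\beta)$; (M1) $\neg\Diamond\alpha\to\Box(\alpha\to\beta)$; (M2) $\Box\beta\to\Box(\alpha\to\beta)$; (M3) $\Diamond\beta\to\Diamond(\alpha\to\beta)$;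 (M4) $\Diamond\neg\alpha\to\Diamond(\alpha\to\beta)$; (T) $\Box\alpha\to\alpha$; (DN1) $\Box\alpha\to\Box\neg\neg\alpha$; (DN2) $\Box\neg\neg\alpha\to\Box\alpha$; modus ponens is the only rule. ${\bf Tm4d}$ (also written ${\bf T4md}$) is ${\bf Tmd}$ plus (4) $\Box\alpha\to\Box\Box\alpha$. *)

theory Defs
  imports Main
begin

datatype form = Var nat | Neg form | Box form | Imp form form

definition Dia :: "form \<Rightarrow> form" where "Dia a = Neg (Box (Neg a))"
definition Or :: "form \<Rightarrow> form \<Rightarrow> form" where "Or a b = Imp (Neg a) b"

fun BigOr :: "form list \<Rightarrow> form" where
  "BigOr [] = Var 0"  (* unused: only applied to lists of length >= 2 *)
| "BigOr (a # as) = foldl Or a as"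

definition alpha :: "nat \<Rightarrow> form" where
  "alpha n = BigOr (map Var [1..<n+1])"
definition beta :: "nat \<Rightarrow> nat \<Rightarrow> form" where
  "beta n i = BigOr (map Var (filter (\<lambda>j. j \<noteq> i) [1..<n+1]))"
definition gamma :: "nat \<Rightarrow> form" where
  "gamma n = BigOr (map (\<lambda>i. Imp (Box (Neg (Box (alpha n)))) (Box (Neg (Box (beta n i))))) [1..<n+1])"

inductive cpc_ax :: "form \<Rightarrow> bool" where
  A1: "cpc_ax (Imp a (Imp b a))"
| A2: "cpc_ax (Imp (Imp a (Imp b c)) (Imp (Imp a b) (Imp a c)))"
| A3: "cpc_ax (Imp (Imp (Neg a) (Neg b)) (Imp b a))"

inductive tmd_ax :: "form \<Rightarrow> bool" where
  CPC: "cpc_ax a \<Longrightarrow> tmd_ax a"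
| K: "tmd_ax (Imp (Box (Imp a b)) (Imp (Box a) (Box b)))"
| Kdet: "tmd_ax (Imp (Box (Imp a b)) (Imp (Dia a) (Box b)))"
| K2: "tmd_ax (Imp (Dia (Imp a b)) (Imp (Box a) (Dia b)))"
| M1: "tmd_ax (Imp (Neg (Dia a)) (Box (Imp a b)))"
| M2: "tmd_ax (Imp (Box b) (Box (Imp a b)))"
| M3: "tmd_ax (Imp (Dia b) (Dia (Imp a b)))"
| M4: "tmd_ax (Imp (Dia (Neg a)) (Dia (Imp a b)))"
| T: "tmd_ax (Imp (Box a) a)"
| DN1: "tmd_ax (Imp (Box a) (Box (Neg (Neg a))))"
| DN2: "tmd_ax (Imp (Box (Neg (Neg a))) (Box a))"

inductive tm4d_ax :: "form \<Rightarrow> bool" where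
  Tmd: "tmd_ax a \<Longrightarrow> tm4d_ax a"
| Four: "tm4d_ax (Imp (Box a) (Box (Box a)))"

inductive derivable :: "(form \<Rightarrow> bool) \<Rightarrow> form \<Rightarrow> bool" for Ax where
  ax: "Ax a \<Longrightarrow> derivable Ax a"
| mp: "derivable Ax (Imp a b) \<Longrightarrow> derivable Ax a \<Longrightarrow> derivable Ax b"

end

theory Submission
  imports Defs
begin

fun st :: "form \<Rightarrow> form \<Rightarrow> int" where
  "st A (Var k) = 0"
| "st A (Neg a) = - st A a"
| "st A (Imp a b) = max (- st A a) (st A b)"
| "st A (Box a) = (if st A a = 1 then 1 else if a = A then -1 else 0)"

fun ev :: "form \<Rightarrow> form \<Rightarrow> bool" where
  "ev A (Var k) = True"
| "ev A (Neg a) = (\<not> ev A a)"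
| "ev A (Imp a b) = (ev A a \<longrightarrow> ev A b)"
| "ev A (Box a) = (st A a = 1)"

lemma st_range: "st A a \<in> {-1,0,1}"
  by (induction a) auto

lemma st_bounds: "-1 \<le> st A a \<and> st A a \<le> 1"
  using st_range[of A a] by auto

lemma st_ev: "(st A a = 1 \<longrightarrow> ev A a) \<and> (st A a = -1 \<longrightarrow> \<not> ev A a)"
proof (induction a)
  case (Imp a b)
  then show ?case using st_range[of A a] st_range[of A b] by (auto simp: max_def)
qed auto

lemma ax_valid: "tm4d_ax f \<Longrightarrow> ev A f"
proof (induction rule: tm4d_ax.induct)
  case (Tmd a)
  then show ?case
  proof (induction rule: tmd_ax.induct)
    case (CPC a)
    then show ?case by (induction rule: cpc_ax.induct) auto
  next
    case (T a) then show ?case using st_ev[of A a] by auto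
  qed (auto simp: Dia_def max_def split: if_splits, (smt (verit) st_bounds)+)
qed auto

lemma sound: "derivable tm4d_ax f \<Longrightarrow> ev A f"
  by (induction rule: derivable.induct) (auto simp: ax_valid)

lemma tmd_sub: "derivable tmd_ax f \<Longrightarrow> derivable tm4d_ax f"
  by (induction rule: derivable.induct) (auto intro: derivable.intros tm4d_ax.intros)

fun vs :: "form \<Rightarrow> nat set" where
  "vs (Var k) = {k}"
| "vs (Neg a) = vs a"
| "vs (Imp a b) = vs a \<union> vs b"
| "vs (Box a) = vs a"

lemma foldl_vs: "vs (foldl Or a as) = vs a \<union> \<Union> (vs ` set as)"
  by (induction as arbitrary: a) (auto simp: Or_def)

lemma foldl_st: "st A a = 0 \<Longrightarrow> \<forall>x\<in>set as. st A x = 0 \<Longrightarrow> st A (foldl Or a as) = 0"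
  by (induction as arbitrary: a) (auto simp: Or_def)

lemma foldl_ev: "ev A (foldl Or a as) = (ev A a \<or> (\<exists>x\<in>set as. ev A x))"
  by (induction as arbitrary: a) (auto simp: Or_def)

lemma bigor_vs: "xs \<noteq> [] \<Longrightarrow> vs (BigOr (map Var xs)) = set xs"
  by (cases xs) (auto simp: foldl_vs)

lemma bigor_st: "xs \<noteq> [] \<Longrightarrow> st A (BigOr (map Var xs)) = 0"
  by (cases xs) (simp_all add: foldl_st)

lemma bigor_ev: "xs \<noteq> [] \<Longrightarrow> ev A (BigOr xs) = (\<exists>x\<in>set xs. ev A x)"
  by (cases xs) (auto simp: foldl_ev)

lemma gamma_false:
  assumes "n \<ge> 3"
  shows "\<not> ev (alpha n) (gamma n)"
proof -
  let ?A = "alpha n"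
  have ne: "filter (\<lambda>j. j \<noteq> i) [1..<n+1] \<noteq> []" for i
  proof -
    have "(if i = 1 then 2 else 1) \<in> set (filter (\<lambda>j. j \<noteq> i) [1..<n+1])" using assms by auto
    then show ?thesis by auto
  qed
  have ne2: "[1..<n+1] \<noteq> []" using assms by simp
  have sa: "st ?A ?A = 0" unfolding alpha_def using bigor_st[OF ne2] .
  have sb: "st ?A (beta n i) = 0" for i unfolding beta_def using bigor_st[OF ne] .
  have neq: "beta n i \<noteq> ?A" if "i \<in> set [1..<n+1]" for i
  proof
    assume "beta n i = ?A"
    then have "vs (beta n i) = vs ?A" by simp
    then show False using that unfolding beta_def alpha_def
      using bigor_vs[OF ne, of i] bigor_vs[OF ne2] by auto
  qed
  have "\<not> ev ?A (Imp (Box (Neg (Box ?A))) (Box (Neg (Box (beta n i)))))" if "i \<in> set [1..<n+1]" for i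
    using sa sb[of i] neq[OF that] by simp
  then show ?thesis unfolding gamma_def
    by (subst bigor_ev) (use ne2 in \<open>auto simp del: ev.simps\<close>)
qed

theorem mainTheorem16:
  shows "\<forall>S \<in> {tmd_ax, tm4d_ax}. \<forall>n::nat. n \<ge> 3 \<longrightarrow> \<not> derivable S (gamma n)"
  using gamma_false sound tmd_sub by blast

end
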